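(* Let $H$ be a cocommutative Hopf algebra, $M$ a left $H$-module, $\alpha\in H\otimes H$, and $m\in M$ an element that is not torsion (i.e. $hm=0$ with $h\in H$ implies $h=0$). Then $\alpha\otimes_H m=0$ in $(H\otimes H)\otimes_H M$ if and only if $\alpha=0$.
   Context: $H\otimes H$ is a right $H$-module via $\alpha\cdot h=\alpha\Delta(h)$, which defines $(H\otimes H)\otimes_H M$. *)

theory Defs
  imports Complex_Main "HOL-Library.Poly_Mapping"
begin

text \<open>Free vector spaces over a field 'k are modelled by finitely supported
functions (poly_mapping). Tensor products are quotients of free vector spaces by
the relevant relations; elements of a tensor product are represented by elements
of the free space, and "t = 0 in the tensor product" means t lies in the span of
the relations.\<close>

definition pm_smul :: "'k::field \<Rightarrow> ('a \<Rightarrow>\<^sub>0 'k) \<Rightarrow> ('a \<Rightarrow>\<^sub>0 'k)" where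
  "pm_smul c p = Poly_Mapping.map (\<lambda>x. c * x) p"

definition gen :: "'a \<Rightarrow> ('a \<Rightarrow>\<^sub>0 'k::field)" where
  "gen x = Poly_Mapping.single x 1"

definition pspan :: "('a \<Rightarrow>\<^sub>0 'k::field) set \<Rightarrow> ('a \<Rightarrow>\<^sub>0 'k) set" where
  "pspan S = module.span pm_smul S"

definition bilin_rels ::
  "('k::field \<Rightarrow> 'v::ab_group_add \<Rightarrow> 'v) \<Rightarrow> ('k \<Rightarrow> 'w::ab_group_add \<Rightarrow> 'w)
     \<Rightarrow> (('v \<times> 'w) \<Rightarrow>\<^sub>0 'k) set" where
  "bilin_rels sV sW =
     {gen (x + x', y) - gen (x, y) - gen (x', y) | x x' y. True} \<union>
     {gen (x, y + y') - gen (x, y) - gen (x, y') | x y y'. True} \<union>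
     {gen (sV c x, y) - pm_smul c (gen (x, y)) | c x y. True} \<union>
     {gen (x, sW c y) - pm_smul c (gen (x, y)) | c x y. True}"

definition trilin_rels ::
  "('k::field \<Rightarrow> 'h::ab_group_add \<Rightarrow> 'h) \<Rightarrow> (('h \<times> 'h \<times> 'h) \<Rightarrow>\<^sub>0 'k) set" where
  "trilin_rels s =
     {gen (x + x', y, z) - gen (x, y, z) - gen (x', y, z) | x x' y z. True} \<union>
     {gen (x, y + y', z) - gen (x, y, z) - gen (x, y', z) | x y y' z. True} \<union>
     {gen (x, y, z + z') - gen (x, y, z) - gen (x, y, z') | x y z z'. True} \<union>
     {gen (s c x, y, z) - pm_smul c (gen (x, y, z)) | c x y z. True} \<union>
     {gen (x, s c y, z) - pm_smul c (gen (x, y, z)) | c x y z. True} \<union>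
     {gen (x, y, s c z) - pm_smul c (gen (x, y, z)) | c x y z. True}"

definition teq2 :: "('k::field \<Rightarrow> 'h::ab_group_add \<Rightarrow> 'h)
    \<Rightarrow> (('h \<times> 'h) \<Rightarrow>\<^sub>0 'k) \<Rightarrow> (('h \<times> 'h) \<Rightarrow>\<^sub>0 'k) \<Rightarrow> bool" where
  "teq2 s p q \<longleftrightarrow> p - q \<in> pspan (bilin_rels s s)"

definition teq3 :: "('k::field \<Rightarrow> 'h::ab_group_add \<Rightarrow> 'h)
    \<Rightarrow> (('h \<times> 'h \<times> 'h) \<Rightarrow>\<^sub>0 'k) \<Rightarrow> (('h \<times> 'h \<times> 'h) \<Rightarrow>\<^sub>0 'k) \<Rightarrow> bool" where
  "teq3 s p q \<longleftrightarrow> p - q \<in> pspan (trilin_rels s)"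

definition mult2 :: "(('h::ring_1 \<times> 'h) \<Rightarrow>\<^sub>0 'k::field) \<Rightarrow> (('h \<times> 'h) \<Rightarrow>\<^sub>0 'k)
    \<Rightarrow> (('h \<times> 'h) \<Rightarrow>\<^sub>0 'k)" where
  "mult2 p q = (\<Sum>(a, b)\<in>Poly_Mapping.keys p. \<Sum>(c, d)\<in>Poly_Mapping.keys q.
       pm_smul (Poly_Mapping.lookup p (a, b) * Poly_Mapping.lookup q (c, d)) (gen (a * c, b * d)))"

definition k_algebra :: "('k::field \<Rightarrow> 'h::ring_1 \<Rightarrow> 'h) \<Rightarrow> bool" where
  "k_algebra s \<longleftrightarrow> vector_space s \<and>
     (\<forall>c x y. s c (x * y) = s c x * y \<and> s c (x * y) = x * s c y)"

definition cocomm_hopf_algebra ::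
  "('k::field \<Rightarrow> 'h::ring_1 \<Rightarrow> 'h) \<Rightarrow> ('h \<Rightarrow> (('h \<times> 'h) \<Rightarrow>\<^sub>0 'k))
     \<Rightarrow> ('h \<Rightarrow> 'k) \<Rightarrow> ('h \<Rightarrow> 'h) \<Rightarrow> bool" where
  "cocomm_hopf_algebra s \<Delta> \<epsilon> S \<longleftrightarrow>
     k_algebra s \<and>
     \<comment> \<open>\<Delta> is a linear algebra homomorphism H \<rightarrow> H \<otimes> H\<close>
     (\<forall>x y. teq2 s (\<Delta> (x + y)) (\<Delta> x + \<Delta> y)) \<and>
     (\<forall>c x. teq2 s (\<Delta> (s c x)) (pm_smul c (\<Delta> x))) \<and>
     (\<forall>x y. teq2 s (\<Delta> (x * y)) (mult2 (\<Delta> x) (\<Delta> y))) \<and>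
     teq2 s (\<Delta> 1) (gen (1, 1)) \<and>
     \<comment> \<open>coassociativity\<close>
     (\<forall>h. teq3 s
        (\<Sum>(a, b)\<in>Poly_Mapping.keys (\<Delta> h). \<Sum>(c, d)\<in>Poly_Mapping.keys (\<Delta> a).
            pm_smul (Poly_Mapping.lookup (\<Delta> h) (a, b) * Poly_Mapping.lookup (\<Delta> a) (c, d)) (gen (c, d, b)))
        (\<Sum>(a, b)\<in>Poly_Mapping.keys (\<Delta> h). \<Sum>(c, d)\<in>Poly_Mapping.keys (\<Delta> b).
            pm_smul (Poly_Mapping.lookup (\<Delta> h) (a, b) * Poly_Mapping.lookup (\<Delta> b) (c, d)) (gen (a, c, d)))) \<and>
     \<comment> \<open>\<epsilon> is a linear algebra homomorphism H \<rightarrow> k\<close>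
     (\<forall>x y. \<epsilon> (x + y) = \<epsilon> x + \<epsilon> y) \<and>
     (\<forall>c x. \<epsilon> (s c x) = c * \<epsilon> x) \<and>
     (\<forall>x y. \<epsilon> (x * y) = \<epsilon> x * \<epsilon> y) \<and>
     \<epsilon> 1 = 1 \<and>
     \<comment> \<open>counit axioms\<close>
     (\<forall>h. (\<Sum>(a, b)\<in>Poly_Mapping.keys (\<Delta> h). s (Poly_Mapping.lookup (\<Delta> h) (a, b) * \<epsilon> a) b) = h) \<and>
     (\<forall>h. (\<Sum>(a, b)\<in>Poly_Mapping.keys (\<Delta> h). s (Poly_Mapping.lookup (\<Delta> h) (a, b) * \<epsilon> b) a) = h) \<and>
     \<comment> \<open>antipode: linear, S(h1) h2 = \<epsilon>(h) 1 = h1 S(h2)\<close>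
     (\<forall>x y. S (x + y) = S x + S y) \<and>
     (\<forall>c x. S (s c x) = s c (S x)) \<and>
     (\<forall>h. (\<Sum>(a, b)\<in>Poly_Mapping.keys (\<Delta> h). s (Poly_Mapping.lookup (\<Delta> h) (a, b)) (S a * b)) = s (\<epsilon> h) 1) \<and>
     (\<forall>h. (\<Sum>(a, b)\<in>Poly_Mapping.keys (\<Delta> h). s (Poly_Mapping.lookup (\<Delta> h) (a, b)) (a * S b)) = s (\<epsilon> h) 1) \<and>
     \<comment> \<open>cocommutativity\<close>
     (\<forall>h. teq2 s (\<Sum>(a, b)\<in>Poly_Mapping.keys (\<Delta> h). pm_smul (Poly_Mapping.lookup (\<Delta> h) (a, b)) (gen (b, a))) (\<Delta> h))"

text \<open>Left H-module M with action act (k acts through k\<cdot>1 \<subseteq> H).\<close>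
definition left_module :: "('h::ring_1 \<Rightarrow> 'm::ab_group_add \<Rightarrow> 'm) \<Rightarrow> bool" where
  "left_module act \<longleftrightarrow>
     (\<forall>x y m. act (x + y) m = act x m + act y m) \<and>
     (\<forall>x m n. act x (m + n) = act x m + act x n) \<and>
     (\<forall>x y m. act (x * y) m = act x (act y m)) \<and>
     (\<forall>m. act 1 m = m)"

text \<open>Relations defining (H \<otimes> H) \<otimes>_H M as a quotient of the free space on
(representatives of H \<otimes> H) \<times> M: k-bilinearity, the relations of H \<otimes> H in the
first slot, and the balancing relations \<alpha>\<Delta>(h) \<otimes> m = \<alpha> \<otimes> hm.\<close>
definition balanced_rels ::
  "('k::field \<Rightarrow> 'h::ring_1 \<Rightarrow> 'h) \<Rightarrow> ('h \<Rightarrow> (('h \<times> 'h) \<Rightarrow>\<^sub>0 'k))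
     \<Rightarrow> ('h \<Rightarrow> 'm::ab_group_add \<Rightarrow> 'm)
     \<Rightarrow> (((('h \<times> 'h) \<Rightarrow>\<^sub>0 'k) \<times> 'm) \<Rightarrow>\<^sub>0 'k) set" where
  "balanced_rels s \<Delta> act =
     bilin_rels pm_smul (\<lambda>c m. act (s c 1) m) \<union>
     {gen (r, m) | r m. r \<in> pspan (bilin_rels s s)} \<union>
     {gen (mult2 \<alpha> (\<Delta> h), m) - gen (\<alpha>, act h m) | \<alpha> h m. True}"

definition tensorH_zero ::
  "('k::field \<Rightarrow> 'h::ring_1 \<Rightarrow> 'h) \<Rightarrow> ('h \<Rightarrow> (('h \<times> 'h) \<Rightarrow>\<^sub>0 'k))
     \<Rightarrow> ('h \<Rightarrow> 'm::ab_group_add \<Rightarrow> 'm) \<Rightarrow> (('h \<times> 'h) \<Rightarrow>\<^sub>0 'k) \<Rightarrow> 'm \<Rightarrow> bool" where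
  "tensorH_zero s \<Delta> act \<alpha> m \<longleftrightarrow> gen (\<alpha>, m) \<in> pspan (balanced_rels s \<Delta> act)"

definition tensor2_zero ::
  "('k::field \<Rightarrow> 'h::ab_group_add \<Rightarrow> 'h) \<Rightarrow> (('h \<times> 'h) \<Rightarrow>\<^sub>0 'k) \<Rightarrow> bool" where
  "tensor2_zero s \<alpha> \<longleftrightarrow> \<alpha> \<in> pspan (bilin_rels s s)"

end

theory Submission
  imports Defs
begin


lemma lookup_pm_smul [simp]: "Poly_Mapping.lookup (pm_smul c p) x = c * Poly_Mapping.lookup p x"
  unfolding pm_smul_def by transfer (simp add: when_def)

lemma pm_module: "module (pm_smul :: 'k::field \<Rightarrow> ('a \<Rightarrow>\<^sub>0 'k) \<Rightarrow> _)"
  by unfold_locales (auto intro!: poly_mapping_eqI simp: lookup_add algebra_simps)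

interpretation pm: module "pm_smul :: 'k::field \<Rightarrow> ('a \<Rightarrow>\<^sub>0 'k) \<Rightarrow> _"
  by (rule pm_module)

lemma pm_smul_0 [simp]: "pm_smul 0 p = 0" "pm_smul c 0 = 0"
  by (auto intro!: poly_mapping_eqI)
lemma pm_smul_1 [simp]: "pm_smul 1 p = p"
  by (auto intro!: poly_mapping_eqI)
lemma pm_smul_smul [simp]: "pm_smul c (pm_smul d p) = pm_smul (c*d) p"
  by (auto intro!: poly_mapping_eqI)
lemma pm_smul_add: "pm_smul c (p + q) = pm_smul c p + pm_smul c q"
  by (auto intro!: poly_mapping_eqI simp: lookup_add algebra_simps)
lemma pm_smul_diff: "pm_smul c (p - q) = pm_smul c p - pm_smul c q"
  by (auto intro!: poly_mapping_eqI simp: lookup_minus algebra_simps)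
lemma pm_smul_add_left: "pm_smul (c + d) p = pm_smul c p + pm_smul d p"
  by (auto intro!: poly_mapping_eqI simp: lookup_add algebra_simps)
lemma pm_smul_sum: "pm_smul c (sum f A) = sum (\<lambda>x. pm_smul c (f x)) A"
  by (induction A rule: infinite_finite_induct) (auto simp: pm_smul_add)



definition lin :: "('a \<Rightarrow> ('b \<Rightarrow>\<^sub>0 'k::field)) \<Rightarrow> ('a \<Rightarrow>\<^sub>0 'k) \<Rightarrow> ('b \<Rightarrow>\<^sub>0 'k)" where
  "lin f p = (\<Sum>x\<in>Poly_Mapping.keys p. pm_smul (Poly_Mapping.lookup p x) (f x))"

lemma lin_superset:
  assumes "finite A" "Poly_Mapping.keys p \<subseteq> A"
  shows "lin f p = (\<Sum>x\<in>A. pm_smul (Poly_Mapping.lookup p x) (f x))"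
  unfolding lin_def
  by (rule sum.mono_neutral_left) (use assms in \<open>auto simp: in_keys_iff\<close>)

lemma lin_add: "lin f (p + q) = lin f p + lin f q"
proof -
  let ?A = "Poly_Mapping.keys p \<union> Poly_Mapping.keys q"
  have "Poly_Mapping.keys (p + q) \<subseteq> ?A" by (rule keys_add)
  then have "lin f (p + q) = (\<Sum>x\<in>?A. pm_smul (Poly_Mapping.lookup (p+q) x) (f x))"
    by (intro lin_superset) auto
  also have "\<dots> = (\<Sum>x\<in>?A. pm_smul (Poly_Mapping.lookup p x) (f x)) + (\<Sum>x\<in>?A. pm_smul (Poly_Mapping.lookup q x) (f x))"
    by (simp add: lookup_add pm_smul_add_left sum.distrib)
  also have "\<dots> = lin f p + lin f q"
    by (subst (1 2) lin_superset[where A="?A"]) auto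
  finally show ?thesis .
qed

lemma lin_zero [simp]: "lin f 0 = 0"
  by (simp add: lin_def)

lemma lin_smul: "lin f (pm_smul c p) = pm_smul c (lin f p)"
proof -
  have "Poly_Mapping.keys (pm_smul c p) \<subseteq> Poly_Mapping.keys p"
    by (auto simp: in_keys_iff)
  then have "lin f (pm_smul c p) = (\<Sum>x\<in>Poly_Mapping.keys p. pm_smul (c * Poly_Mapping.lookup p x) (f x))"
    by (subst lin_superset[where A="Poly_Mapping.keys p"]) auto
  then show ?thesis by (simp add: lin_def pm_smul_sum)
qed

lemma lin_diff: "lin f (p - q) = lin f p - lin f q"
  using lin_add[of f "p - q" q] by simp

lemma lin_uminus: "lin f (- p) = - lin f p"
  using lin_diff[of f 0 p] by simp

lemma lin_sum: "lin f (sum g A) = (\<Sum>x\<in>A. lin f (g x))"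
  by (induction A rule: infinite_finite_induct) (auto simp: lin_add)

lemma keys_gen [simp]: "Poly_Mapping.keys (gen x :: _ \<Rightarrow>\<^sub>0 'k::field) = {x}"
  by (simp add: gen_def)

lemma lookup_gen: "Poly_Mapping.lookup (gen x :: _ \<Rightarrow>\<^sub>0 'k::field) y = (if x = y then 1 else 0)"
  by (simp add: gen_def lookup_single)

lemma lin_gen [simp]: "lin f (gen x) = f x"
  by (simp add: lin_def lookup_gen)

lemma lin_compose: "lin g (lin f p) = lin (\<lambda>x. lin g (f x)) p"
proof -
  have "lin g (lin f p) = (\<Sum>x\<in>Poly_Mapping.keys p. lin g (pm_smul (Poly_Mapping.lookup p x) (f x)))"
    by (simp only: lin_def[of f] lin_sum)
  then show ?thesis by (simp add: lin_smul lin_def[of "\<lambda>x. lin g (f x)"])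
qed

lemma lin_gen_id [simp]: "lin gen p = p"
proof (rule poly_mapping_eqI)
  fix y
  show "Poly_Mapping.lookup (lin gen p) y = Poly_Mapping.lookup p y"
  proof -
    have "Poly_Mapping.lookup (lin gen p) y = (\<Sum>x\<in>Poly_Mapping.keys p. if x = y then Poly_Mapping.lookup p x else 0)"
      unfolding lin_def lookup_sum by (rule sum.cong) (auto simp: lookup_gen)
    also have "\<dots> = Poly_Mapping.lookup p y"
      by (simp add: sum.delta' in_keys_iff)
    finally show ?thesis .
  qed
qed

lemma lin_fun_add: "lin (\<lambda>x. f x + g x) p = lin f p + lin g p"
  by (simp add: lin_def pm_smul_add sum.distrib)

lemma lin_fun_diff: "lin (\<lambda>x. f x - g x) p = lin f p - lin g p"
  by (simp add: lin_def pm_smul_diff sum_subtractf)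

lemma lin_fun_smul: "lin (\<lambda>x. pm_smul c (f x)) p = pm_smul c (lin f p)"
  by (simp add: lin_def pm_smul_sum mult.commute)

lemma lin_fun_zero [simp]: "lin (\<lambda>x. 0) p = 0"
  by (simp add: lin_def)

lemma lin_cong: "(\<And>x. x \<in> Poly_Mapping.keys p \<Longrightarrow> f x = g x) \<Longrightarrow> lin f p = lin g p"
  by (simp add: lin_def)

lemma pspan_lin:
  assumes "p \<in> pspan S" and "\<And>r. r \<in> S \<Longrightarrow> lin f r \<in> pspan T"
  shows "lin f p \<in> pspan T"
proof -
  have "module.subspace pm_smul {p. lin f p \<in> pspan T}"
    unfolding pm.subspace_def
    by (auto simp: lin_add lin_smul pspan_def intro: pm.span_add pm.span_scale pm.span_zero)
  then show ?thesis
    using pm.span_induct[of p S "\<lambda>p. lin f p \<in> pspan T"] assms unfolding pspan_def by auto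
qed

lemma pspan_pointwise:
  assumes "\<And>x. x \<in> Poly_Mapping.keys p \<Longrightarrow> f x - g x \<in> pspan T"
  shows "lin f p - lin g p \<in> pspan T"
proof -
  have "lin f p - lin g p = (\<Sum>x\<in>Poly_Mapping.keys p. pm_smul (Poly_Mapping.lookup p x) (f x - g x))"
    by (simp add: lin_def pm_smul_diff sum_subtractf)
  also have "\<dots> \<in> pspan T"
    using assms unfolding pspan_def by (intro pm.span_sum pm.span_scale) auto
  finally show ?thesis .
qed



lemma teq2_refl [simp]: "teq2 s p p"
  by (simp add: teq2_def pspan_def pm.span_zero)
lemma teq2_sym: "teq2 s p q \<Longrightarrow> teq2 s q p"
  unfolding teq2_def pspan_def using pm.span_neg by fastforce
lemma teq2_trans [trans]: "teq2 s p q \<Longrightarrow> teq2 s q r \<Longrightarrow> teq2 s p r"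
  unfolding teq2_def pspan_def using pm.span_add by fastforce
lemma teq2_add: "teq2 s p q \<Longrightarrow> teq2 s p' q' \<Longrightarrow> teq2 s (p + p') (q + q')"
  unfolding teq2_def pspan_def using pm.span_add by (fastforce simp: algebra_simps)
lemma teq2_diff: "teq2 s p q \<Longrightarrow> teq2 s p' q' \<Longrightarrow> teq2 s (p - p') (q - q')"
  unfolding teq2_def pspan_def using pm.span_diff by (fastforce simp: algebra_simps)
lemma teq2_smul: "teq2 s p q \<Longrightarrow> teq2 s (pm_smul c p) (pm_smul c q)"
  unfolding teq2_def pspan_def using pm.span_scale by (fastforce simp: pm_smul_diff)
lemma teq2_eq: "p = q \<Longrightarrow> teq2 s p q" by simp
lemma teq2_R2: "teq2 s p q \<Longrightarrow> q \<in> pspan (bilin_rels s s) \<Longrightarrow> p \<in> pspan (bilin_rels s s)"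
  unfolding teq2_def pspan_def using pm.span_add by fastforce

definition bil :: "('k::field \<Rightarrow> 'h::ab_group_add \<Rightarrow> 'h) \<Rightarrow> ('h \<times> 'h \<Rightarrow> (('h \<times> 'h) \<Rightarrow>\<^sub>0 'k)) \<Rightarrow> bool" where
  "bil s f \<longleftrightarrow> (\<forall>x x' y. teq2 s (f (x + x', y)) (f (x, y) + f (x', y))) \<and>
     (\<forall>x y y'. teq2 s (f (x, y + y')) (f (x, y) + f (x, y'))) \<and>
     (\<forall>c x y. teq2 s (f (s c x, y)) (pm_smul c (f (x, y)))) \<and>
     (\<forall>c x y. teq2 s (f (x, s c y)) (pm_smul c (f (x, y))))"

lemma bil_lin_R2:
  assumes "bil s f" "p \<in> pspan (bilin_rels s s)"
  shows "lin f p \<in> pspan (bilin_rels s s)"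
proof (rule pspan_lin[OF assms(2)])
  fix r assume "r \<in> bilin_rels s s"
  then consider (1) x x' y where "r = gen (x + x', y) - gen (x, y) - gen (x', y)"
      | (2) x y y' where "r = gen (x, y + y') - gen (x, y) - gen (x, y')"
      | (4) c x y where "r = gen (s c x, y) - pm_smul c (gen (x, y))"
      | (5) c x y where "r = gen (x, s c y) - pm_smul c (gen (x, y))"
      unfolding bilin_rels_def by blast
  then show "lin f r \<in> pspan (bilin_rels s s)"
  proof cases
  qed (use assms(1) in \<open>simp_all only: bil_def teq2_def lin_diff lin_add lin_smul lin_gen diff_diff_eq\<close>)
qed

lemma bil_lin_teq2: "bil s f \<Longrightarrow> teq2 s p q \<Longrightarrow> teq2 s (lin f p) (lin f q)"
  unfolding teq2_def by (metis bil_lin_R2 lin_diff)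

lemma lin_pointwise_teq2:
  "(\<And>x. teq2 s (f x) (g x)) \<Longrightarrow> teq2 s (lin f p) (lin g p)"
  unfolding teq2_def by (rule pspan_pointwise) auto

definition tril :: "('k::field \<Rightarrow> 'h::ab_group_add \<Rightarrow> 'h) \<Rightarrow> ('h \<times> 'h \<times> 'h \<Rightarrow> (('h \<times> 'h) \<Rightarrow>\<^sub>0 'k)) \<Rightarrow> bool" where
  "tril s f \<longleftrightarrow> (\<forall>x x' y z. teq2 s (f (x + x', y, z)) (f (x, y, z) + f (x', y, z))) \<and>
     (\<forall>x y y' z. teq2 s (f (x, y + y', z)) (f (x, y, z) + f (x, y', z))) \<and>
     (\<forall>x y z z'. teq2 s (f (x, y, z + z')) (f (x, y, z) + f (x, y, z'))) \<and>
     (\<forall>c x y z. teq2 s (f (s c x, y, z)) (pm_smul c (f (x, y, z)))) \<and>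
     (\<forall>c x y z. teq2 s (f (x, s c y, z)) (pm_smul c (f (x, y, z)))) \<and>
     (\<forall>c x y z. teq2 s (f (x, y, s c z)) (pm_smul c (f (x, y, z))))"

lemma tril_lin_teq3:
  assumes "tril s f" "teq3 s p q"
  shows "teq2 s (lin f p) (lin f q)"
proof -
  have "lin f (p - q) \<in> pspan (bilin_rels s s)"
  proof (rule pspan_lin)
    show "p - q \<in> pspan (trilin_rels s)" using assms(2) by (simp add: teq3_def)
  next
    fix r assume "r \<in> trilin_rels s"
    then consider (1) x x' y z where "r = gen (x + x', y, z) - gen (x, y, z) - gen (x', y, z)"
      | (2) x y y' z where "r = gen (x, y + y', z) - gen (x, y, z) - gen (x, y', z)"
      | (3) x y z z' where "r = gen (x, y, z + z') - gen (x, y, z) - gen (x, y, z')"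
      | (4) c x y z where "r = gen (s c x, y, z) - pm_smul c (gen (x, y, z))"
      | (5) c x y z where "r = gen (x, s c y, z) - pm_smul c (gen (x, y, z))"
      | (6) c x y z where "r = gen (x, y, s c z) - pm_smul c (gen (x, y, z))"
      unfolding trilin_rels_def by (elim UnE CollectE exE) metis+
    then show "lin f r \<in> pspan (bilin_rels s s)"
    proof cases
    qed (use assms(1) in \<open>simp_all only: tril_def teq2_def lin_diff lin_add lin_smul lin_gen diff_diff_eq\<close>)
  qed
  then show ?thesis by (simp add: teq2_def lin_diff)
qed



definition hlin :: "('k::field \<Rightarrow> 'h::ab_group_add \<Rightarrow> 'h) \<Rightarrow> ('h \<Rightarrow> 'h) \<Rightarrow> bool" where
  "hlin s \<phi> \<longleftrightarrow> (\<forall>x y. \<phi> (x + y) = \<phi> x + \<phi> y) \<and> (\<forall>c x. \<phi> (s c x) = s c (\<phi> x))"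

definition lG :: "('k::field \<Rightarrow> 'h::ab_group_add \<Rightarrow> 'h) \<Rightarrow> ('h \<Rightarrow> (('h \<times> 'h) \<Rightarrow>\<^sub>0 'k)) \<Rightarrow> bool" where
  "lG s G \<longleftrightarrow> (\<forall>x y. teq2 s (G (x + y)) (G x + G y)) \<and> (\<forall>c x. teq2 s (G (s c x)) (pm_smul c (G x)))"

lemma gen_add1: "teq2 s (gen (x + x', y)) (gen (x, y) + gen (x', y))"
proof -
  have "gen (x + x', y) - gen (x, y) - gen (x', y) \<in> bilin_rels s s"
    unfolding bilin_rels_def by blast
  then show ?thesis unfolding teq2_def pspan_def by (simp add: diff_diff_eq pm.span_base)
qed

lemma gen_add2: "teq2 s (gen (x, y + y')) (gen (x, y) + gen (x, y'))"
proof -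
  have "gen (x, y + y') - gen (x, y) - gen (x, y') \<in> bilin_rels s s"
    unfolding bilin_rels_def by blast
  then show ?thesis unfolding teq2_def pspan_def by (simp add: diff_diff_eq pm.span_base)
qed

lemma gen_smul1: "teq2 s (gen (s c x, y)) (pm_smul c (gen (x, y)))"
proof -
  have "gen (s c x, y) - pm_smul c (gen (x, y)) \<in> bilin_rels s s"
    unfolding bilin_rels_def by blast
  then show ?thesis unfolding teq2_def pspan_def by (simp add: pm.span_base)
qed

lemma gen_smul2: "teq2 s (gen (x, s c y)) (pm_smul c (gen (x, y)))"
proof -
  have "gen (x, s c y) - pm_smul c (gen (x, y)) \<in> bilin_rels s s"
    unfolding bilin_rels_def by blast
  then show ?thesis unfolding teq2_def pspan_def by (simp add: pm.span_base)
qed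

lemma bil_gen:
  assumes "hlin s \<phi>1" "hlin s \<phi>2"
  shows "bil s (\<lambda>(x, y). gen (\<phi>1 x, \<phi>2 y))"
  using assms unfolding bil_def hlin_def by (simp add: gen_add1 gen_add2 gen_smul1 gen_smul2)

lemma lG_gen2: "hlin s \<phi> \<Longrightarrow> lG s (\<lambda>y. gen (a, \<phi> y))"
  unfolding lG_def hlin_def by (simp add: gen_add2 gen_smul2)

lemma lG_gen1: "hlin s \<phi> \<Longrightarrow> lG s (\<lambda>x. gen (\<phi> x, d))"
  unfolding lG_def hlin_def by (simp add: gen_add1 gen_smul1)

lemma lG_zero: assumes "lG s G" shows "teq2 s (G 0) 0"
proof -
  have "teq2 s (G (0 + 0)) (G 0 + G 0)" using assms unfolding lG_def by blast
  then have "G 0 - (G 0 + G 0) \<in> pspan (bilin_rels s s)" by (simp add: teq2_def)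
  then have "- (G 0) \<in> pspan (bilin_rels s s)" by simp
  then show ?thesis unfolding teq2_def pspan_def using pm.span_neg by fastforce
qed

lemma conv:
  assumes "lG s G"
  shows "teq2 s (G (\<Sum>x\<in>A. s (c x) (F x))) (\<Sum>x\<in>A. pm_smul (c x) (G (F x)))"
proof (induction A rule: infinite_finite_induct)
  case (infinite A)
  then show ?case using lG_zero[OF assms] by simp
next
  case empty
  then show ?case using lG_zero[OF assms] by simp
next
  case (insert x F')
  have "teq2 s (G (s (c x) (F x) + (\<Sum>x\<in>F'. s (c x) (F x))))
      (G (s (c x) (F x)) + G (\<Sum>x\<in>F'. s (c x) (F x)))"
    using assms by (simp add: lG_def)
  also have "teq2 s \<dots> (pm_smul (c x) (G (F x)) + (\<Sum>x\<in>F'. pm_smul (c x) (G (F x))))"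
    using assms insert by (intro teq2_add) (simp_all add: lG_def)
  finally show ?case using insert by simp
qed

lemma mult2_lin: "mult2 p q = lin (\<lambda>(a, b). lin (\<lambda>(c, d). gen (a * c, b * d)) q) p"
  by (simp add: mult2_def lin_def split_def pm_smul_sum)

locale hctx =
  fixes s :: "'k::field \<Rightarrow> 'h::ring_1 \<Rightarrow> 'h"
    and \<Delta> :: "'h \<Rightarrow> (('h \<times> 'h) \<Rightarrow>\<^sub>0 'k)"
    and \<epsilon> :: "'h \<Rightarrow> 'k"
    and S :: "'h \<Rightarrow> 'h"
  assumes H: "cocomm_hopf_algebra s \<Delta> \<epsilon> S"
begin

lemma kalg: "k_algebra s"
  using H unfolding cocomm_hopf_algebra_def by blast

lemma vs: "vector_space s" and alg1: "s c (x * y) = s c x * y" and alg2: "s c (x * y) = x * s c y"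
  using kalg unfolding k_algebra_def by blast+

sublocale V: vector_space s by (rule vs)

lemma D_add: "teq2 s (\<Delta> (x + y)) (\<Delta> x + \<Delta> y)"
  and D_smul: "teq2 s (\<Delta> (s c x)) (pm_smul c (\<Delta> x))"
  and D_mult: "teq2 s (\<Delta> (x * y)) (mult2 (\<Delta> x) (\<Delta> y))"
  and S_add: "S (x + y) = S x + S y"
  and S_smul: "S (s c x) = s c (S x)"
  using H by (auto simp: cocomm_hopf_algebra_def)

lemma counit1_raw: "(\<Sum>(a, b)\<in>Poly_Mapping.keys (\<Delta> h). s (Poly_Mapping.lookup (\<Delta> h) (a, b) * \<epsilon> a) b) = h"
  and anti1_raw: "(\<Sum>(a, b)\<in>Poly_Mapping.keys (\<Delta> h). s (Poly_Mapping.lookup (\<Delta> h) (a, b)) (S a * b)) = s (\<epsilon> h) 1"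
  and anti2_raw: "(\<Sum>(a, b)\<in>Poly_Mapping.keys (\<Delta> h). s (Poly_Mapping.lookup (\<Delta> h) (a, b)) (a * S b)) = s (\<epsilon> h) 1"
  using H unfolding cocomm_hopf_algebra_def by blast+

lemma coassoc_raw: "teq3 s
        (\<Sum>(a, b)\<in>Poly_Mapping.keys (\<Delta> h). \<Sum>(c, d)\<in>Poly_Mapping.keys (\<Delta> a).
            pm_smul (Poly_Mapping.lookup (\<Delta> h) (a, b) * Poly_Mapping.lookup (\<Delta> a) (c, d)) (gen (c, d, b)))
        (\<Sum>(a, b)\<in>Poly_Mapping.keys (\<Delta> h). \<Sum>(c, d)\<in>Poly_Mapping.keys (\<Delta> b).
            pm_smul (Poly_Mapping.lookup (\<Delta> h) (a, b) * Poly_Mapping.lookup (\<Delta> b) (c, d)) (gen (a, c, d)))"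
  using H unfolding cocomm_hopf_algebra_def by blast

lemma counit1:
  assumes "lG s G"
  shows "teq2 s (lin (\<lambda>(a, b). pm_smul (\<epsilon> a) (G b)) (\<Delta> h)) (G h)"
proof -
  have "teq2 s (G h) (G (\<Sum>x\<in>Poly_Mapping.keys (\<Delta> h). s (Poly_Mapping.lookup (\<Delta> h) x * \<epsilon> (fst x)) (snd x)))"
    using counit1_raw[of h] by (simp add: split_def)
  also have "teq2 s \<dots> (\<Sum>x\<in>Poly_Mapping.keys (\<Delta> h). pm_smul (Poly_Mapping.lookup (\<Delta> h) x * \<epsilon> (fst x)) (G (snd x)))"
    by (rule conv[OF assms])
  also have "\<dots> = lin (\<lambda>(a, b). pm_smul (\<epsilon> a) (G b)) (\<Delta> h)"
    by (simp add: lin_def split_def)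
  finally show ?thesis by (rule teq2_sym)
qed

lemma anti1:
  assumes "lG s G"
  shows "teq2 s (lin (\<lambda>(a, b). G (S a * b)) (\<Delta> h)) (pm_smul (\<epsilon> h) (G 1))"
proof -
  have "teq2 s (G (s (\<epsilon> h) 1)) (G (\<Sum>x\<in>Poly_Mapping.keys (\<Delta> h). s (Poly_Mapping.lookup (\<Delta> h) x) (S (fst x) * snd x)))"
    using anti1_raw[of h] by (simp add: split_def)
  also have "teq2 s \<dots> (lin (\<lambda>(a, b). G (S a * b)) (\<Delta> h))"
    using conv[OF assms] by (simp add: lin_def split_def)
  finally show ?thesis using assms teq2_sym teq2_trans unfolding lG_def by blast
qed

lemma anti2:
  assumes "lG s G"
  shows "teq2 s (lin (\<lambda>(a, b). G (a * S b)) (\<Delta> h)) (pm_smul (\<epsilon> h) (G 1))"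
proof -
  have "teq2 s (G (s (\<epsilon> h) 1)) (G (\<Sum>x\<in>Poly_Mapping.keys (\<Delta> h). s (Poly_Mapping.lookup (\<Delta> h) x) (fst x * S (snd x))))"
    using anti2_raw[of h] by (simp add: split_def)
  also have "teq2 s \<dots> (lin (\<lambda>(a, b). G (a * S b)) (\<Delta> h))"
    using conv[OF assms] by (simp add: lin_def split_def)
  finally show ?thesis using assms teq2_sym teq2_trans unfolding lG_def by blast
qed

lemma coassoc:
  assumes "tril s T"
  shows "teq2 s (lin (\<lambda>(a, b). lin (\<lambda>(c, d). T (c, d, b)) (\<Delta> a)) (\<Delta> h))
                (lin (\<lambda>(a, b). lin (\<lambda>(c, d). T (a, c, d)) (\<Delta> b)) (\<Delta> h))"
proof -
  have X: "(\<Sum>(a, b)\<in>Poly_Mapping.keys (\<Delta> h). \<Sum>(c, d)\<in>Poly_Mapping.keys (\<Delta> a).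
            pm_smul (Poly_Mapping.lookup (\<Delta> h) (a, b) * Poly_Mapping.lookup (\<Delta> a) (c, d)) (gen (c, d, b)))
     = lin (\<lambda>(a, b). lin (\<lambda>(c, d). gen (c, d, b)) (\<Delta> a)) (\<Delta> h)"
    by (simp add: lin_def split_def pm_smul_sum)
  have Y: "(\<Sum>(a, b)\<in>Poly_Mapping.keys (\<Delta> h). \<Sum>(c, d)\<in>Poly_Mapping.keys (\<Delta> b).
            pm_smul (Poly_Mapping.lookup (\<Delta> h) (a, b) * Poly_Mapping.lookup (\<Delta> b) (c, d)) (gen (a, c, d)))
     = lin (\<lambda>(a, b). lin (\<lambda>(c, d). gen (a, c, d)) (\<Delta> b)) (\<Delta> h)"
    by (simp add: lin_def split_def pm_smul_sum)
  have "teq2 s (lin T (lin (\<lambda>(a, b). lin (\<lambda>(c, d). gen (c, d, b)) (\<Delta> a)) (\<Delta> h)))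
               (lin T (lin (\<lambda>(a, b). lin (\<lambda>(c, d). gen (a, c, d)) (\<Delta> b)) (\<Delta> h)))"
    using tril_lin_teq3[OF assms coassoc_raw[of h]] X Y by simp
  then show ?thesis by (simp add: lin_compose split_def)
qed

end


lemma tril_gen:
  assumes "\<And>c c' e. \<phi> (c + c') e = \<phi> c e + \<phi> c' e"
    and "\<And>c e e'. \<phi> c (e + e') = \<phi> c e + \<phi> c e'"
    and "\<And>k c e. \<phi> (s k c) e = s k (\<phi> c e)"
    and "\<And>k c e. \<phi> c (s k e) = s k (\<phi> c e)"
  shows "tril s (\<lambda>(c, e, f). gen (\<phi> c e, f))"
  using assms unfolding tril_def by (simp add: gen_add1 gen_add2 gen_smul1 gen_smul2)

lemma hlin_id: "hlin s (\<lambda>x. x)" by (simp add: hlin_def)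

context hctx
begin

lemma mult_s_left [simp]: "s c x * y = s c (x * y)" using alg1 by simp
lemma mult_s_right [simp]: "x * s c y = s c (x * y)" using alg2 by simp

lemma hlin_mult_left: "hlin s (\<lambda>x. a * x)" by (simp add: hlin_def distrib_left)
lemma hlin_mult_right: "hlin s (\<lambda>x. x * a)" by (simp add: hlin_def distrib_right)
lemma hlin_S_left: "hlin s (\<lambda>x. a * S x)" by (simp add: hlin_def distrib_left S_add S_smul)

lemma bil_D:
  assumes "\<And>a. bil s (g a)"
    and "\<And>a a' z. teq2 s (g (a + a') z) (g a z + g a' z)"
    and "\<And>c a z. teq2 s (g (s c a) z) (pm_smul c (g a z))"
  shows "bil s (\<lambda>(a, b). lin (g a) (\<Delta> b))"
  unfolding bil_def
proof (intro conjI allI; simp only: prod.case)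
  fix x x' y
  have "teq2 s (lin (g (x + x')) (\<Delta> y)) (lin (\<lambda>z. g x z + g x' z) (\<Delta> y))"
    by (rule lin_pointwise_teq2) (rule assms(2))
  then show "teq2 s (lin (g (x + x')) (\<Delta> y)) (lin (g x) (\<Delta> y) + lin (g x') (\<Delta> y))"
    by (simp add: lin_fun_add)
next
  fix x y y'
  have "teq2 s (lin (g x) (\<Delta> (y + y'))) (lin (g x) (\<Delta> y + \<Delta> y'))"
    by (rule bil_lin_teq2[OF assms(1) D_add])
  then show "teq2 s (lin (g x) (\<Delta> (y + y'))) (lin (g x) (\<Delta> y) + lin (g x) (\<Delta> y'))"
    by (simp add: lin_add)
next
  fix c x y
  have "teq2 s (lin (g (s c x)) (\<Delta> y)) (lin (\<lambda>z. pm_smul c (g x z)) (\<Delta> y))"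
    by (rule lin_pointwise_teq2) (rule assms(3))
  then show "teq2 s (lin (g (s c x)) (\<Delta> y)) (pm_smul c (lin (g x) (\<Delta> y)))"
    by (simp add: lin_fun_smul)
next
  fix c x y
  have "teq2 s (lin (g x) (\<Delta> (s c y))) (lin (g x) (pm_smul c (\<Delta> y)))"
    by (rule bil_lin_teq2[OF assms(1) D_smul])
  then show "teq2 s (lin (g x) (\<Delta> (s c y))) (pm_smul c (lin (g x) (\<Delta> y)))"
    by (simp add: lin_smul)
qed

lemma bil_D_mult:
  assumes "hlin s \<phi>"
  shows "bil s (\<lambda>(a, b). lin (\<lambda>(c, d). gen (a * \<phi> c, d)) (\<Delta> b))"
proof (rule bil_D)
  fix a
  have "hlin s (\<lambda>c. a * \<phi> c)" using assms by (simp add: hlin_def distrib_left)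
  then show "bil s (\<lambda>(c, d). gen (a * \<phi> c, d))"
    using bil_gen[of s "\<lambda>c. a * \<phi> c" "\<lambda>x. x"] hlin_id[of s] by simp
next
  fix a a' z
  show "teq2 s ((\<lambda>(c, d). gen ((a + a') * \<phi> c, d)) z) ((\<lambda>(c, d). gen (a * \<phi> c, d)) z + (\<lambda>(c, d). gen (a' * \<phi> c, d)) z)"
    by (cases z) (simp add: distrib_right gen_add1)
next
  fix c a z
  show "teq2 s ((\<lambda>(e, d). gen (s c a * \<phi> e, d)) z) (pm_smul c ((\<lambda>(e, d). gen (a * \<phi> e, d)) z))"
    by (cases z) (simp add: gen_smul1)
qed

definition \<theta>0 where "\<theta>0 = (\<lambda>(a, b). lin (\<lambda>(c, d). gen (a * S c, d)) (\<Delta> b))"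
definition \<theta> where "\<theta> p = lin \<theta>0 p"
definition \<psi>0 where "\<psi>0 = (\<lambda>(a, b). lin (\<lambda>(c, d). gen (a * c, d)) (\<Delta> b))"
definition \<psi> where "\<psi> p = lin \<psi>0 p"

lemma bil_\<theta>0: "bil s \<theta>0"
  unfolding \<theta>0_def using bil_D_mult[of S] by (simp add: hlin_def S_add S_smul)

lemma bil_\<psi>0: "bil s \<psi>0"
  unfolding \<psi>0_def using bil_D_mult[of "\<lambda>x. x"] hlin_id[of s] by simp

lemma \<theta>_teq: "teq2 s p q \<Longrightarrow> teq2 s (\<theta> p) (\<theta> q)"
  unfolding \<theta>_def by (rule bil_lin_teq2[OF bil_\<theta>0])
lemma \<psi>_teq: "teq2 s p q \<Longrightarrow> teq2 s (\<psi> p) (\<psi> q)"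
  unfolding \<psi>_def by (rule bil_lin_teq2[OF bil_\<psi>0])
lemma \<theta>_R2: "p \<in> pspan (bilin_rels s s) \<Longrightarrow> \<theta> p \<in> pspan (bilin_rels s s)"
  unfolding \<theta>_def by (rule bil_lin_R2[OF bil_\<theta>0])
lemma \<psi>_R2: "p \<in> pspan (bilin_rels s s) \<Longrightarrow> \<psi> p \<in> pspan (bilin_rels s s)"
  unfolding \<psi>_def by (rule bil_lin_R2[OF bil_\<psi>0])

lemma I1: "teq2 s (\<psi> (\<theta>0 (a, b))) (gen (a, b))"
proof -
  let ?T = "\<lambda>(c, e, f). gen (a * (S c * e), f)"
  have tr: "tril s ?T"
    by (rule tril_gen) (simp_all add: distrib_left distrib_right S_add S_smul)
  have "\<psi> (\<theta>0 (a, b)) = lin (\<lambda>(c, d). lin (\<lambda>(e, f). ?T (c, e, f)) (\<Delta> d)) (\<Delta> b)"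
    by (simp add: \<psi>_def \<psi>0_def \<theta>0_def lin_compose split_def mult.assoc)
  also have "teq2 s \<dots> (lin (\<lambda>(c, d). lin (\<lambda>(e, f). ?T (e, f, d)) (\<Delta> c)) (\<Delta> b))"
    by (rule teq2_sym[OF coassoc[OF tr]])
  also have "teq2 s \<dots> (lin (\<lambda>(c, d). pm_smul (\<epsilon> c) (gen (a, d))) (\<Delta> b))"
  proof (rule lin_pointwise_teq2)
    fix x :: "'h \<times> 'h"
    obtain c d where x: "x = (c, d)" by (cases x)
    have "teq2 s (lin (\<lambda>(e, f). gen (a * (S e * f), d)) (\<Delta> c)) (pm_smul (\<epsilon> c) (gen (a * 1, d)))"
      using anti1[OF lG_gen1[OF hlin_mult_left], of a d c] by simp
    then show "teq2 s ((\<lambda>(c, d). lin (\<lambda>(e, f). ?T (e, f, d)) (\<Delta> c)) x) ((\<lambda>(c, d). pm_smul (\<epsilon> c) (gen (a, d))) x)"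
      by (simp add: x)
  qed
  also have "teq2 s \<dots> (gen (a, b))"
    using counit1[OF lG_gen2[OF hlin_id], of a b] by simp
  finally show ?thesis .
qed

lemma I2: "teq2 s (\<theta> (\<psi>0 (a, b))) (gen (a, b))"
proof -
  let ?T = "\<lambda>(c, e, f). gen (a * (c * S e), f)"
  have tr: "tril s ?T"
    by (rule tril_gen) (simp_all add: distrib_left distrib_right S_add S_smul)
  have "\<theta> (\<psi>0 (a, b)) = lin (\<lambda>(c, d). lin (\<lambda>(e, f). ?T (c, e, f)) (\<Delta> d)) (\<Delta> b)"
    by (simp add: \<theta>_def \<psi>0_def \<theta>0_def lin_compose split_def mult.assoc)
  also have "teq2 s \<dots> (lin (\<lambda>(c, d). lin (\<lambda>(e, f). ?T (e, f, d)) (\<Delta> c)) (\<Delta> b))"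
    by (rule teq2_sym[OF coassoc[OF tr]])
  also have "teq2 s \<dots> (lin (\<lambda>(c, d). pm_smul (\<epsilon> c) (gen (a, d))) (\<Delta> b))"
  proof (rule lin_pointwise_teq2)
    fix x :: "'h \<times> 'h"
    obtain c d where x: "x = (c, d)" by (cases x)
    have "teq2 s (lin (\<lambda>(e, f). gen (a * (e * S f), d)) (\<Delta> c)) (pm_smul (\<epsilon> c) (gen (a * 1, d)))"
      using anti2[OF lG_gen1[OF hlin_mult_left], of a d c] by simp
    then show "teq2 s ((\<lambda>(c, d). lin (\<lambda>(e, f). ?T (e, f, d)) (\<Delta> c)) x) ((\<lambda>(c, d). pm_smul (\<epsilon> c) (gen (a, d))) x)"
      by (simp add: x)
  qed
  also have "teq2 s \<dots> (gen (a, b))"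
    using counit1[OF lG_gen2[OF hlin_id], of a b] by simp
  finally show ?thesis .
qed

lemma \<psi>\<theta>: "teq2 s (\<psi> (\<theta> p)) p"
proof -
  have "\<psi> (\<theta> p) = lin (\<lambda>x. \<psi> (\<theta>0 x)) p"
    by (simp add: \<psi>_def \<theta>_def lin_compose)
  also have "teq2 s \<dots> (lin gen p)"
    by (rule lin_pointwise_teq2) (metis I1 surj_pair)
  finally show ?thesis by simp
qed

lemma \<theta>\<psi>: "teq2 s (\<theta> (\<psi> p)) p"
proof -
  have "\<theta> (\<psi> p) = lin (\<lambda>x. \<theta> (\<psi>0 x)) p"
    by (simp add: \<psi>_def \<theta>_def lin_compose)
  also have "teq2 s \<dots> (lin gen p)"
    by (rule lin_pointwise_teq2) (metis I2 surj_pair)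
  finally show ?thesis by simp
qed

end


lemma bil_lin_pw:
  assumes "\<And>z. bil s (\<lambda>(a, b). F z (a, b))"
  shows "bil s (\<lambda>(a, b). lin (\<lambda>z. F z (a, b)) q)"
  unfolding bil_def
proof (intro conjI allI; simp only: prod.case)
  fix x x' y
  show "teq2 s (lin (\<lambda>z. F z (x + x', y)) q) (lin (\<lambda>z. F z (x, y)) q + lin (\<lambda>z. F z (x', y)) q)"
    unfolding lin_fun_add[symmetric] by (rule lin_pointwise_teq2) (use assms in \<open>auto simp: bil_def\<close>)
next
  fix x y y'
  show "teq2 s (lin (\<lambda>z. F z (x, y + y')) q) (lin (\<lambda>z. F z (x, y)) q + lin (\<lambda>z. F z (x, y')) q)"
    unfolding lin_fun_add[symmetric] by (rule lin_pointwise_teq2) (use assms in \<open>auto simp: bil_def\<close>)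
next
  fix c x y
  show "teq2 s (lin (\<lambda>z. F z (s c x, y)) q) (pm_smul c (lin (\<lambda>z. F z (x, y)) q))"
    unfolding lin_fun_smul[symmetric] by (rule lin_pointwise_teq2) (use assms in \<open>auto simp: bil_def\<close>)
next
  fix c x y
  show "teq2 s (lin (\<lambda>z. F z (x, s c y)) q) (pm_smul c (lin (\<lambda>z. F z (x, y)) q))"
    unfolding lin_fun_smul[symmetric] by (rule lin_pointwise_teq2) (use assms in \<open>auto simp: bil_def\<close>)
qed

context hctx
begin

lemma bil_mult2: "bil s (\<lambda>(a, b). lin (\<lambda>(c, d). gen (a * c, b * d)) q)"
proof -
  have "bil s (\<lambda>(a, b). lin (\<lambda>z. (\<lambda>(a, b). gen (a * fst z, b * snd z)) (a, b)) q)"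
    by (rule bil_lin_pw) (simp only: prod.case, rule bil_gen[OF hlin_mult_right hlin_mult_right])
  then show ?thesis by (simp add: split_def)
qed

lemma mult2_teq: "teq2 s p p' \<Longrightarrow> teq2 s (mult2 p q) (mult2 p' q)"
  unfolding mult2_lin by (rule bil_lin_teq2[OF bil_mult2])

definition act2 where "act2 h p = lin (\<lambda>(x, y). gen (x, y * h)) p"

lemma I3: "teq2 s (\<psi> (act2 h p)) (mult2 (\<psi> p) (\<Delta> h))"
proof -
  have L: "\<psi> (act2 h p) = lin (\<lambda>(x, y). \<psi>0 (x, y * h)) p"
    by (simp add: \<psi>_def act2_def lin_compose split_def)
  have R: "mult2 (\<psi> p) (\<Delta> h) = lin (\<lambda>x. mult2 (\<psi>0 x) (\<Delta> h)) p"
    by (simp add: \<psi>_def mult2_lin lin_compose)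
  have "teq2 s (lin (\<lambda>(x, y). \<psi>0 (x, y * h)) p) (lin (\<lambda>x. mult2 (\<psi>0 x) (\<Delta> h)) p)"
  proof (rule lin_pointwise_teq2)
    fix z :: "'h \<times> 'h"
    obtain x y where z: "z = (x, y)" by (cases z)
    have b: "bil s (\<lambda>(c, d). gen (x * c, d))"
      using bil_gen[OF hlin_mult_left hlin_id] by simp
    have "\<psi>0 (x, y * h) = lin (\<lambda>(c, d). gen (x * c, d)) (\<Delta> (y * h))"
      by (simp add: \<psi>0_def)
    also have "teq2 s \<dots> (lin (\<lambda>(c, d). gen (x * c, d)) (mult2 (\<Delta> y) (\<Delta> h)))"
      by (rule bil_lin_teq2[OF b D_mult])
    also have "\<dots> = mult2 (\<psi>0 (x, y)) (\<Delta> h)"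
      by (simp add: \<psi>0_def mult2_lin lin_compose split_def mult.assoc)
    finally show "teq2 s ((\<lambda>(x, y). \<psi>0 (x, y * h)) z) (mult2 (\<psi>0 z) (\<Delta> h))"
      by (simp add: z)
  qed
  then show ?thesis using L R by simp
qed

lemma I4: "teq2 s (\<theta> (mult2 \<beta> (\<Delta> h))) (act2 h (\<theta> \<beta>))"
proof -
  have "teq2 s (mult2 \<beta> (\<Delta> h)) (mult2 (\<psi> (\<theta> \<beta>)) (\<Delta> h))"
    by (rule mult2_teq[OF teq2_sym[OF \<psi>\<theta>]])
  also have "teq2 s \<dots> (\<psi> (act2 h (\<theta> \<beta>)))"
    by (rule teq2_sym[OF I3])
  finally have "teq2 s (\<theta> (mult2 \<beta> (\<Delta> h))) (\<theta> (\<psi> (act2 h (\<theta> \<beta>))))"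
    by (rule \<theta>_teq)
  also have "teq2 s \<dots> (act2 h (\<theta> \<beta>))" by (rule \<theta>\<psi>)
  finally show ?thesis .
qed

end


locale hmod = hctx s \<Delta> \<epsilon> S
  for s :: "'k::field \<Rightarrow> 'h::ring_1 \<Rightarrow> 'h" and \<Delta> \<epsilon> S +
  fixes act :: "'h \<Rightarrow> 'm::ab_group_add \<Rightarrow> 'm" and m :: 'm
  assumes LM: "left_module act" and NT: "\<forall>h. act h m = 0 \<longrightarrow> h = 0"
begin

lemma act_add1: "act (x + y) n = act x n + act y n"
  and act_add2: "act x (n + n') = act x n + act x n'"
  and act_mult: "act (x * y) n = act x (act y n)"
  and act_one: "act 1 n = n"
  using LM unfolding left_module_def by blast+

lemma act_diff1: "act (x - y) n = act x n - act y n"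
  using act_add1[of "x - y" y n] by (simp add: algebra_simps)

definition sM where "sM c n = act (s c 1) n"

lemma act_s: "act (s c v) n = sM c (act v n)"
proof -
  have "s c v = s c 1 * v" by simp
  then show ?thesis by (simp only: sM_def act_mult)
qed

lemma vsM: "vector_space sM"
proof unfold_locales
  fix a b :: 'k and x y :: 'm
  show "sM a (x + y) = sM a x + sM a y" by (simp add: sM_def act_add2)
  show "sM (a + b) x = sM a x + sM b x" by (simp add: sM_def act_add1 V.scale_left_distrib)
  have "s a 1 * s b 1 = s (a * b) 1" by simp
  then show "sM a (sM b x) = sM (a * b) x" by (metis sM_def act_mult)
  show "sM 1 x = x" by (simp add: sM_def act_one)
qed

lemma lin_act: "Vector_Spaces.linear s sM (\<lambda>h. act h m)"
proof -
  interpret M: vector_space sM by (rule vsM)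
  show ?thesis
    by unfold_locales (simp_all add: act_add1 act_s)
qed

lemma inj_act: "inj (\<lambda>h. act h m)"
proof (rule injI)
  fix x y assume "act x m = act y m"
  then have "act (x - y) m = 0" by (simp add: act_diff1)
  then show "x = y" using NT by (metis eq_iff_diff_eq_0)
qed

lemma ex_pi: "\<exists>g. Vector_Spaces.linear sM s g \<and> (\<forall>h. g (act h m) = h)"
proof -
  interpret P: vector_space_pair s sM
    by (intro vector_space_pair.intro vs vsM)
  obtain g where "Vector_Spaces.linear sM s g" "g \<circ> (\<lambda>h. act h m) = id"
    using P.linear_injective_left_inverse[OF lin_act inj_act] by blast
  then show ?thesis by (metis comp_apply id_apply)
qed

definition \<pi> where "\<pi> = (SOME g. Vector_Spaces.linear sM s g \<and> (\<forall>h. g (act h m) = h))"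

lemma \<pi>_lin: "Vector_Spaces.linear sM s \<pi>" and \<pi>_act: "\<pi> (act h m) = h"
  using someI_ex[OF ex_pi] unfolding \<pi>_def[symmetric] by blast+

lemma \<pi>_add: "\<pi> (u + v) = \<pi> u + \<pi> v" and \<pi>_scale: "\<pi> (sM c u) = s c (\<pi> u)"
proof -
  interpret L: Vector_Spaces.linear sM s \<pi> by (rule \<pi>_lin)
  show "\<pi> (u + v) = \<pi> u + \<pi> v" by (rule L.add)
  show "\<pi> (sM c u) = s c (\<pi> u)" by (rule L.scale)
qed

lemma hlin_pa: "hlin s (\<lambda>y. \<pi> (act y n))"
  by (simp add: hlin_def act_add1 \<pi>_add act_s \<pi>_scale)

definition \<Psi> where "\<Psi> n p = lin (\<lambda>(x, y). gen (x, \<pi> (act y n))) p"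

lemma bil_\<Psi>: "bil s (\<lambda>(x, y). gen (x, \<pi> (act y n)))"
  using bil_gen[OF hlin_id hlin_pa] by simp

lemma \<Psi>_m: "\<Psi> m p = p"
proof -
  have "\<Psi> m p = lin gen p"
    unfolding \<Psi>_def by (rule lin_cong) (auto simp: \<pi>_act)
  then show ?thesis by simp
qed

definition \<Phi>0 where "\<Phi>0 = (\<lambda>(\<beta>, n). \<Psi> n (\<theta> \<beta>))"

lemma \<Psi>_add: "teq2 s (\<Psi> (n + n') q) (\<Psi> n q + \<Psi> n' q)"
  unfolding \<Psi>_def lin_fun_add[symmetric]
  by (rule lin_pointwise_teq2) (auto simp: act_add2 \<pi>_add gen_add2 split: prod.splits)

lemma \<Psi>_smul: "teq2 s (\<Psi> (sM c n) q) (pm_smul c (\<Psi> n q))"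
proof -
  have e: "act y (sM c n) = act (s c y) n" for y
  proof -
    have "y * s c 1 = s c y" by simp
    then show ?thesis by (metis sM_def act_mult)
  qed
  show ?thesis
    unfolding \<Psi>_def lin_fun_smul[symmetric]
    by (rule lin_pointwise_teq2) (auto simp: e act_s \<pi>_scale gen_smul2 split: prod.splits)
qed

lemma \<Psi>_act2: "\<Psi> n (act2 h q) = \<Psi> (act h n) q"
  by (simp add: \<Psi>_def act2_def lin_compose split_def act_mult)

lemma rels_ok:
  assumes "r \<in> balanced_rels s \<Delta> act"
  shows "lin \<Phi>0 r \<in> pspan (bilin_rels s s)"
proof -
  let ?R = "pspan (bilin_rels s s)"
  have z: "0 \<in> ?R" by (simp add: pspan_def pm.span_zero)
  have cases: "(\<exists>x x' n. r = gen (x + x', n) - gen (x, n) - gen (x', n)) \<or>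
    (\<exists>x n n'. r = gen (x, n + n') - gen (x, n) - gen (x, n')) \<or>
    (\<exists>c x n. r = gen (pm_smul c x, n) - pm_smul c (gen (x, n))) \<or>
    (\<exists>c x n. r = gen (x, act (s c 1) n) - pm_smul c (gen (x, n))) \<or>
    (\<exists>r' n. r = gen (r', n) \<and> r' \<in> ?R) \<or>
    (\<exists>\<alpha> h n. r = gen (mult2 \<alpha> (\<Delta> h), n) - gen (\<alpha>, act h n))"
  proof -
    from assms consider (b) "r \<in> bilin_rels pm_smul (\<lambda>c m. act (s c 1) m)"
      | (5) "r \<in> {gen (r, m) | r m. r \<in> ?R}"
      | (6) "r \<in> {gen (mult2 \<alpha> (\<Delta> h), m) - gen (\<alpha>, act h m) | \<alpha> h m. True}"
      unfolding balanced_rels_def by blast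
    then show ?thesis
    proof cases
      case b
      then show ?thesis unfolding bilin_rels_def by blast
    next
      case 5
      then show ?thesis by blast
    next
      case 6
      then show ?thesis by blast
    qed
  qed
  consider (1) x x' n where "r = gen (x + x', n) - gen (x, n) - gen (x', n)"
    | (2) x n n' where "r = gen (x, n + n') - gen (x, n) - gen (x, n')"
    | (3) c x n where "r = gen (pm_smul c x, n) - pm_smul c (gen (x, n))"
    | (4) c x n where "r = gen (x, act (s c 1) n) - pm_smul c (gen (x, n))"
    | (5) r' n where "r = gen (r', n)" "r' \<in> ?R"
    | (6) \<alpha> h n where "r = gen (mult2 \<alpha> (\<Delta> h), n) - gen (\<alpha>, act h n)"
    using cases by blast
  then show ?thesis
  proof cases
    case 1
    then show ?thesis by (simp add: \<Phi>0_def lin_diff \<theta>_def \<Psi>_def lin_add z)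
  next
    case 2
    then show ?thesis using \<Psi>_add[of n n' "\<theta> x"]
      by (simp add: \<Phi>0_def lin_diff lin_add teq2_def diff_diff_eq)
  next
    case 3
    then show ?thesis by (simp add: \<Phi>0_def lin_diff \<theta>_def \<Psi>_def lin_smul z)
  next
    case 4
    then show ?thesis using \<Psi>_smul[of c n "\<theta> x"]
      by (simp add: \<Phi>0_def lin_diff lin_smul teq2_def sM_def)
  next
    case 5
    then show ?thesis unfolding \<Phi>0_def \<Psi>_def
      by (simp add: bil_lin_R2[OF bil_\<Psi>] \<theta>_R2)
  next
    case 6
    have "teq2 s (\<Psi> n (\<theta> (mult2 \<alpha> (\<Delta> h)))) (\<Psi> n (act2 h (\<theta> \<alpha>)))"
      unfolding \<Psi>_def by (rule bil_lin_teq2[OF bil_\<Psi> I4])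
    then show ?thesis using 6 by (simp add: \<Phi>0_def lin_diff teq2_def \<Psi>_act2)
  qed
qed

theorem main: "tensorH_zero s \<Delta> act \<alpha> m \<longleftrightarrow> tensor2_zero s \<alpha>"
proof
  assume "tensorH_zero s \<Delta> act \<alpha> m"
  then have "gen (\<alpha>, m) \<in> pspan (balanced_rels s \<Delta> act)" by (simp add: tensorH_zero_def)
  then have "lin \<Phi>0 (gen (\<alpha>, m)) \<in> pspan (bilin_rels s s)"
    by (rule pspan_lin) (rule rels_ok)
  then have "\<theta> \<alpha> \<in> pspan (bilin_rels s s)" by (simp add: \<Phi>0_def \<Psi>_m)
  then have "\<psi> (\<theta> \<alpha>) \<in> pspan (bilin_rels s s)" by (rule \<psi>_R2)
  then have "\<alpha> \<in> pspan (bilin_rels s s)" using teq2_R2[OF teq2_sym[OF \<psi>\<theta>]] by blast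
  then show "tensor2_zero s \<alpha>" by (simp add: tensor2_zero_def)
next
  assume "tensor2_zero s \<alpha>"
  then have "gen (\<alpha>, m) \<in> balanced_rels s \<Delta> act"
    unfolding balanced_rels_def tensor2_zero_def by blast
  then show "tensorH_zero s \<Delta> act \<alpha> m"
    by (simp add: tensorH_zero_def pspan_def pm.span_base)
qed

end

theorem lemma2p8:
  fixes s :: "'k::field \<Rightarrow> 'h::ring_1 \<Rightarrow> 'h"
    and \<Delta> :: "'h \<Rightarrow> (('h \<times> 'h) \<Rightarrow>\<^sub>0 'k)"
    and \<epsilon> :: "'h \<Rightarrow> 'k"
    and S :: "'h \<Rightarrow> 'h"
    and act :: "'h \<Rightarrow> 'm::ab_group_add \<Rightarrow> 'm"
    and \<alpha> :: "('h \<times> 'h) \<Rightarrow>\<^sub>0 'k"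
    and m :: 'm
  assumes "cocomm_hopf_algebra s \<Delta> \<epsilon> S"
    and "left_module act"
    and "\<forall>h. act h m = 0 \<longrightarrow> h = 0"
  shows "tensorH_zero s \<Delta> act \<alpha> m \<longleftrightarrow> tensor2_zero s \<alpha>"
proof -
  interpret hmod s \<Delta> \<epsilon> S act m
    using assms by (simp add: hmod_def hctx_def hmod_axioms_def)
  show ?thesis by (rule main)
qed

end
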